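(* Consider a tree power network $(\mathcal{V},\mathcal{E})$, $\mathcal{V}=\{1,\dots,n\}$, with fixed voltage magnitudes $|V_i|=\overline{V}_i>0$, angle limits $\underline{\theta}_{ik}\in[-\pi,0]$, $\overline{\theta}_{ik}\in[0,\pi]$ on each line, and bus power bounds $\underline{P}_i\le P_i\le\overline{P}_i$. Let $\mathcal{P}=\mathcal{P}_\theta\cap\mathcal{P}_P$ and suppose $\mathcal{P}\neq\emptyset$. Assume $$-\tan^{-1}\!\Big(\frac{b_{ik}}{g_{ik}}\Big)<\underline{\theta}_{ik}\le\overline{\theta}_{ik}<\tan^{-1}\!\Big(\frac{b_{ik}}{g_{ik}}\Big)\quad\text{for all }(i,k)\in\mathcal{E}.$$ Then: (1) for every $\mathbf{p}\in\mathcal{P}$ there exists a unique flow vector $\mathbf{f}\in\mathcal{F}_\theta$ with $\mathbf{A}\mathbf{f}=\mathbf{p}$; (2) $\mathcal{P}=\mathcal{O}(\mathcal{P})$; (3) $\mathcal{O}(\mathcal{P})=\mathcal{O}(\mathrm{conv}(\mathcal{P}))$.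
   Context: Each line $(i,k)\in\mathcal{E}$ has admittance $y_{ik}=g_{ik}-jb_{ik}$ with $g_{ik},b_{ik}\ge0$. For $\theta_{ik}=\theta_i-\theta_k$ (difference of bus voltage phases), the line flows are $P_{ik}=\overline{V}_i^2 g_{ik}+\overline{V}_i\overline{V}_k b_{ik}\sin\theta_{ik}-\overline{V}_i\overline{V}_k g_{ik}\cos\theta_{ik}$ and $P_{ki}=\overline{V}_k^2 g_{ik}-\overline{V}_i\overline{V}_k b_{ik}\sin\theta_{ik}-\overline{V}_i\overline{V}_k g_{ik}\cos\theta_{ik}$. The angle-constrained flow region of line $(i,k)$, $\mathcal{F}_{\theta_{ik}}\subset\mathbb{R}^2$, is the set of $(P_{ik},P_{ki})$ as $\theta_{ik}$ ranges over $[\underline{\theta}_{ik},\overline{\theta}_{ik}]$; $\mathcal{F}_\theta=\prod_{(i,k)\in\mathcal{E}}\mathcal{F}_{\theta_{ik}}\subset\mathbb{R}^{2|\mathcal{E}|}$. $\mathbf{A}$ is the $n\times2|\mathcal{E}|$ matrix with $A(i,(k,l))=1$ if $i=k$ and $0$ otherwise, so $(\mathbf{A}\mathbf{f})_i=\sum_{k\sim i}P_{ik}$ is the injection at bus $i$. $\mathcal{P}_\theta=\mathbf{A}\mathcal{F}_\theta$ and $\mathcal{P}_P=\{\mathbf{p}\in\mathbb{R}^n:\underline{P}_i\le P_i\le\overline{P}_i\ \forall i\}$. For $\mathcal{A}\subseteq\mathbb{R}^m$, $\mathcal{O}(\mathcal{A})$ is the set of Pareto-optimal points (points $x\in\mathcal{A}$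 such that no $y\in\mathcal{A}$ has $y\le x$ componentwise with strict inequality in some coordinate); $\mathrm{conv}$ denotes convex hull. *)

theory Defs
  imports "HOL-Analysis.Analysis"
begin

text \<open>Buses are the elements of a finite type 'v (so V = UNIV, n = CARD('v)).
  Lines are given by a set E of ordered pairs (i,k), one orientation per line.
  Line parameters (g, b, angle limits) are indexed by the pair (i,k) in E.\<close>

definition tree_network :: "('v::finite \<times> 'v) set \<Rightarrow> bool" where
  "tree_network E \<longleftrightarrow>
     (\<forall>(i,k)\<in>E. i \<noteq> k \<and> (k,i) \<notin> E) \<and>
     card E = CARD('v) - 1 \<and>
     (\<forall>i j. (i,j) \<in> (E \<union> E\<inverse>)\<^sup>*)"

definition dir_edges :: "('v \<times> 'v) set \<Rightarrow> ('v \<times> 'v) set" where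
  "dir_edges E = E \<union> E\<inverse>"

definition flow_ik :: "('v \<Rightarrow> real) \<Rightarrow> ('v \<times> 'v \<Rightarrow> real) \<Rightarrow> ('v \<times> 'v \<Rightarrow> real)
    \<Rightarrow> 'v \<Rightarrow> 'v \<Rightarrow> real \<Rightarrow> real" where
  "flow_ik Vm g b i k \<theta> =
     (Vm i)\<^sup>2 * g (i,k) + Vm i * Vm k * b (i,k) * sin \<theta> - Vm i * Vm k * g (i,k) * cos \<theta>"

definition flow_ki :: "('v \<Rightarrow> real) \<Rightarrow> ('v \<times> 'v \<Rightarrow> real) \<Rightarrow> ('v \<times> 'v \<Rightarrow> real)
    \<Rightarrow> 'v \<Rightarrow> 'v \<Rightarrow> real \<Rightarrow> real" where
  "flow_ki Vm g b i k \<theta> =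
     (Vm k)\<^sup>2 * g (i,k) - Vm i * Vm k * b (i,k) * sin \<theta> - Vm i * Vm k * g (i,k) * cos \<theta>"

text \<open>Angle-constrained flow region F_theta (product over lines), as vectors indexed
  by ordered pairs; coordinates not corresponding to a directed edge are 0.\<close>
definition flow_region ::
  "('v::finite \<times> 'v) set \<Rightarrow> ('v \<Rightarrow> real) \<Rightarrow> ('v \<times> 'v \<Rightarrow> real) \<Rightarrow> ('v \<times> 'v \<Rightarrow> real)
   \<Rightarrow> ('v \<times> 'v \<Rightarrow> real) \<Rightarrow> ('v \<times> 'v \<Rightarrow> real) \<Rightarrow> (real ^ ('v \<times> 'v)) set" where
  "flow_region E Vm g b \<theta>lo \<theta>hi =
     {f. (\<forall>e. e \<notin> dir_edges E \<longrightarrow> f $ e = 0) \<and>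
         (\<forall>(i,k)\<in>E. \<exists>\<theta>. \<theta>lo (i,k) \<le> \<theta> \<and> \<theta> \<le> \<theta>hi (i,k) \<and>
              f $ (i,k) = flow_ik Vm g b i k \<theta> \<and> f $ (k,i) = flow_ki Vm g b i k \<theta>)}"

definition inj_map :: "('v::finite \<times> 'v) set \<Rightarrow> real ^ ('v \<times> 'v) \<Rightarrow> real ^ 'v" where
  "inj_map E f = (\<chi> i. \<Sum>k\<in>{k. (i,k) \<in> dir_edges E}. f $ (i,k))"

definition inj_region_theta ::
  "('v::finite \<times> 'v) set \<Rightarrow> ('v \<Rightarrow> real) \<Rightarrow> ('v \<times> 'v \<Rightarrow> real) \<Rightarrow> ('v \<times> 'v \<Rightarrow> real)
   \<Rightarrow> ('v \<times> 'v \<Rightarrow> real) \<Rightarrow> ('v \<times> 'v \<Rightarrow> real) \<Rightarrow> (real ^ 'v) set" where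
  "inj_region_theta E Vm g b \<theta>lo \<theta>hi = inj_map E ` flow_region E Vm g b \<theta>lo \<theta>hi"

definition inj_region_P :: "('v::finite \<Rightarrow> real) \<Rightarrow> ('v \<Rightarrow> real) \<Rightarrow> (real ^ 'v) set" where
  "inj_region_P Plo Phi = {p. \<forall>i. Plo i \<le> p $ i \<and> p $ i \<le> Phi i}"

definition pareto :: "(real ^ 'n) set \<Rightarrow> (real ^ 'n) set" where
  "pareto S = {x \<in> S. \<not> (\<exists>y\<in>S. (\<forall>i. y $ i \<le> x $ i) \<and> (\<exists>i. y $ i < x $ i))}"

text \<open>tan^{-1}(b/g) for g, b \<ge> 0, with the value pi/2 when g = 0 (b/g = +infinity).\<close>
definition atan_ratio :: "real \<Rightarrow> real \<Rightarrow> real" where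
  "atan_ratio b g = (if g = 0 then pi / 2 else arctan (b / g))"

end

theory Submission
  imports Defs
begin

lemma tree_leaf:
  fixes E :: "('v::finite \<times> 'v) set"
  assumes tree: "tree_network E" and CE: "C \<subseteq> E" and Cne: "C \<noteq> {}"
  shows "\<exists>e\<in>C. \<exists>v. (v = fst e \<or> v = snd e) \<and> (\<forall>e'\<in>C. (v = fst e' \<or> v = snd e') \<longrightarrow> e' = e)"
proof -
  define R where "R = E \<union> E\<inverse>"
  have conn: "\<And>i j. (i,j) \<in> R\<^sup>*" using tree unfolding tree_network_def R_def by auto
  have cardE: "card E = CARD('v) - 1" using tree unfolding tree_network_def by auto
  have noloop: "\<And>i k. (i,k) \<in> E \<Longrightarrow> i \<noteq> k" using tree unfolding tree_network_def by auto
  define r :: 'v where "r = undefined"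
  define dist where "dist v = (LEAST n. (r,v) \<in> R ^^ n)" for v
  have dist_in: "(r,v) \<in> R ^^ dist v" for v
  proof -
    have "\<exists>n. (r,v) \<in> R ^^ n" using conn rtrancl_power by blast
    then show ?thesis unfolding dist_def by (rule LeastI_ex)
  qed
  have dist_le: "(r,v) \<in> R ^^ n \<Longrightarrow> dist v \<le> n" for v n
    unfolding dist_def by (rule Least_le)
  have step: "(x,y) \<in> R \<Longrightarrow> dist y \<le> Suc (dist x)" for x y
    using dist_le[OF relpow_Suc_I[OF dist_in]] by blast
  have Rsym: "(x,y) \<in> R \<Longrightarrow> (y,x) \<in> R" for x y unfolding R_def by auto
  have par: "\<exists>u. (u,v) \<in> R \<and> Suc (dist u) = dist v" if "v \<noteq> r" for v
  proof -
    have "dist v \<noteq> 0"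
    proof
      assume "dist v = 0" then have "(r,v) \<in> R ^^ 0" using dist_in[of v] by simp
      then show False using that by simp
    qed
    then obtain d where d: "dist v = Suc d" by (cases "dist v") auto
    then have "(r,v) \<in> R ^^ d O R" using dist_in[of v] by simp
    then obtain u where u1: "(r,u) \<in> R ^^ d" and u2: "(u,v) \<in> R" by blast
    have "dist u \<le> d" using dist_le[OF u1] .
    moreover have "dist v \<le> Suc (dist u)" using step[OF u2] .
    ultimately show ?thesis using u2 d by (intro exI[of _ u]) auto
  qed
  define child where "child e v \<longleftrightarrow> e \<in> E \<and> ((v = fst e \<and> Suc (dist (snd e)) = dist v) \<or> (v = snd e \<and> Suc (dist (fst e)) = dist v))" for e v
  have child_ex: "\<exists>e. child e v" if vr: "v \<noteq> r" for v
  proof -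
    obtain u where u: "(u,v) \<in> R" "Suc (dist u) = dist v" using par[OF vr] by blast
    show ?thesis
    proof (cases "(u,v) \<in> E")
      case True then show ?thesis using u unfolding child_def by (intro exI[of _ "(u,v)"]) auto
    next
      case False then have "(v,u) \<in> E" using u unfolding R_def by auto
      then show ?thesis using u unfolding child_def by (intro exI[of _ "(v,u)"]) auto
    qed
  qed
  have child_uniq: "child e v \<Longrightarrow> child e w \<Longrightarrow> v = w" for e v w
    unfolding child_def by auto
  define pe where "pe v = (SOME e. child e v)" for v
  have pe_child: "v \<noteq> r \<Longrightarrow> child (pe v) v" for v
    unfolding pe_def using child_ex by (metis someI_ex)
  have inj: "inj_on pe (UNIV - {r})"
    by (rule inj_onI) (metis DiffD2 insertI1 pe_child child_uniq)
  have sub: "pe ` (UNIV - {r}) \<subseteq> E" using pe_child unfolding child_def by blast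
  have "card (pe ` (UNIV - {r})) = card E"
    using card_image[OF inj] cardE by (simp add: card_Diff_singleton)
  then have surj: "pe ` (UNIV - {r}) = E" using card_subset_eq[OF _ sub] by simp
  have child_pe: "e = pe v" if cev: "child e v" for e v
  proof -
    have "e \<in> E" using cev unfolding child_def by auto
    then obtain w where w: "w \<noteq> r" "e = pe w" using surj by blast
    have "child e w" using pe_child[OF w(1)] w(2) by simp
    then have "w = v" using child_uniq cev by blast
    then show ?thesis using w by simp
  qed
  have edge_child: "\<exists>c. child e c" if "e \<in> E" for e
    using that surj pe_child by blast
  define Vs where "Vs = fst ` C \<union> snd ` C"
  have finVs: "finite Vs" unfolding Vs_def by simp
  have neVs: "Vs \<noteq> {}" using Cne unfolding Vs_def by auto
  obtain v where vV: "v \<in> Vs" and vmax: "\<forall>w\<in>Vs. dist w \<le> dist v"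
  proof -
    have "Max (dist ` Vs) \<in> dist ` Vs" using finVs neVs by simp
    then obtain v where "v \<in> Vs" "dist v = Max (dist ` Vs)" by auto
    moreover have "\<forall>w\<in>Vs. dist w \<le> Max (dist ` Vs)" using finVs by simp
    ultimately show ?thesis using that by metis
  qed
  have key: "child e' v" if ka: "e' \<in> C" "v = fst e' \<or> v = snd e'" for e'
  proof -
    obtain c where c: "child e' c" using edge_child ka CE by blast
    have "c \<in> Vs" using c ka(1) unfolding child_def Vs_def by auto
    then have "dist c \<le> dist v" using vmax by auto
    then show ?thesis using c ka(2) unfolding child_def by auto
  qed
  obtain e where e: "e \<in> C" "v = fst e \<or> v = snd e" using vV unfolding Vs_def by auto
  show ?thesis
  proof (intro bexI[OF _ e(1)] exI[of _ v] conjI)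
    show "v = fst e \<or> v = snd e" by fact
    show "\<forall>e'\<in>C. (v = fst e' \<or> v = snd e') \<longrightarrow> e' = e"
      using key e child_pe by metis
  qed
qed

lemma key_ineq:
  fixes G B lo hi :: real
  assumes G: "G \<ge> 0" and B: "B \<ge> 0" and GB: "G \<noteq> 0 \<or> B \<noteq> 0"
    and ang: "- atan_ratio B G < lo" "hi < atan_ratio B G"
    and th: "lo \<le> t" "t \<le> hi"
  shows "B * cos t + G * sin t > 0 \<and> B * cos t - G * sin t > 0 \<and> B > 0"
proof -
  have tl: "\<bar>t\<bar> < atan_ratio B G" using ang th by auto
  have le: "atan_ratio B G \<le> pi/2"
    unfolding atan_ratio_def using arctan_ubound[of "B/G"] by auto
  have tpi: "\<bar>t\<bar> < pi/2" using tl le by auto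
  have ct: "cos t > 0" using tpi by (intro cos_gt_zero_pi) auto
  show ?thesis
  proof (cases "G = 0")
    case True
    then have "B > 0" using GB B by auto
    then show ?thesis using True ct by simp
  next
    case False
    then have Gp: "G > 0" using G by auto
    have at: "\<bar>t\<bar> < arctan (B/G)" using tl False unfolding atan_ratio_def by simp
    have "arctan (tan \<bar>t\<bar>) = \<bar>t\<bar>" using tpi by (intro arctan_tan) auto
    then have "arctan (tan \<bar>t\<bar>) < arctan (B/G)" using at by simp
    then have "tan \<bar>t\<bar> < B/G" by (simp add: arctan_less_iff)
    moreover have "tan \<bar>t\<bar> = \<bar>sin t\<bar> / cos t" 
    proof (cases "t \<ge> 0")
      case True
      then have "sin t \<ge> 0" using tpi by (intro sin_ge_zero) auto
      then show ?thesis using True by (simp add: tan_def)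
    next
      case False
      then have "sin (-t) \<ge> 0" using tpi by (intro sin_ge_zero) auto
      then show ?thesis using False by (simp add: tan_def)
    qed
    ultimately have "\<bar>sin t\<bar> / cos t < B / G" by simp
    then have "\<bar>sin t\<bar> * G < B * cos t" using ct Gp by (simp add: field_simps)
    moreover have "B > 0"
    proof -
      have "0 \<le> \<bar>t\<bar>" by simp
      then have "0 < arctan (B/G)" using at by linarith
      then have "0 < B/G" using arctan_less_iff[of 0 "B/G"] by simp
      then show ?thesis using Gp by (simp add: zero_less_divide_iff)
    qed
    moreover have "- \<bar>sin t\<bar> \<le> sin t" "sin t \<le> \<bar>sin t\<bar>" by auto
    moreover have "G * sin t \<le> G * \<bar>sin t\<bar>" "- (G * \<bar>sin t\<bar>) \<le> G * sin t"
      using Gp mult_left_mono[of "- \<bar>sin t\<bar>" "sin t" G] mult_left_mono[of "sin t" "\<bar>sin t\<bar>" G] by auto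
    ultimately show ?thesis by (simp add: mult.commute)
  qed
qed

lemma strict_inc:
  fixes f :: "real \<Rightarrow> real"
  assumes "x < y" and der: "\<And>t. x \<le> t \<Longrightarrow> t \<le> y \<Longrightarrow> (f has_real_derivative f' t) (at t)"
    and pos: "\<And>t. x \<le> t \<Longrightarrow> t \<le> y \<Longrightarrow> f' t > 0"
  shows "f x < f y"
proof -
  obtain z where z: "z > x" "z < y" "f y - f x = (y - x) * f' z"
    using MVT2[OF assms(1) der] by blast
  have "f' z > 0" using pos z by auto
  then have "(y - x) * f' z > 0" using assms(1) by simp
  then show ?thesis using z by simp
qed

locale edge =
  fixes a1 a2 W B G lo hi :: real
  assumes W: "W > 0" and B: "B > 0" and G: "G \<ge> 0" and lohi: "lo \<le> hi"
    and key: "\<And>t. lo \<le> t \<Longrightarrow> t \<le> hi \<Longrightarrow> B * cos t + G * sin t > 0 \<and> B * cos t - G * sin t > 0"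
begin

definition fi where "fi t = a1 + W * B * sin t - W * G * cos t"
definition fk where "fk t = a2 - W * B * sin t - W * G * cos t"

lemma cont_fi: "continuous_on S fi" unfolding fi_def by (intro continuous_intros)
lemma cont_fk: "continuous_on S fk" unfolding fk_def by (intro continuous_intros)

lemma fi_mono: assumes a: "lo \<le> x" "x < y" "y \<le> hi" shows "fi x < fi y"
proof -
  have d: "(fi has_real_derivative W * (B * cos t + G * sin t)) (at t)" for t
    unfolding fi_def by (auto intro!: derivative_eq_intros simp: algebra_simps)
  have p: "0 < W * (B * cos t + G * sin t)" if "x \<le> t" "t \<le> y" for t
    using key[of t] W a that by simp
  show ?thesis by (rule strict_inc[OF a(2) d p])
qed

lemma fk_mono: assumes a: "lo \<le> x" "x < y" "y \<le> hi" shows "fk y < fk x"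
proof -
  have d: "((\<lambda>t. - fk t) has_real_derivative W * (B * cos t - G * sin t)) (at t)" for t
    unfolding fk_def by (auto intro!: derivative_eq_intros simp: algebra_simps)
  have p: "0 < W * (B * cos t - G * sin t)" if "x \<le> t" "t \<le> y" for t
    using key[of t] W a that by simp
  have "(\<lambda>t. - fk t) x < (\<lambda>t. - fk t) y" by (rule strict_inc[OF a(2) d p])
  then show ?thesis by simp
qed


lemma fi_le: "lo \<le> x \<Longrightarrow> x \<le> y \<Longrightarrow> y \<le> hi \<Longrightarrow> fi x \<le> fi y"
  using fi_mono by (cases "x = y") (auto simp: less_le)
lemma fk_le: "lo \<le> x \<Longrightarrow> x \<le> y \<Longrightarrow> y \<le> hi \<Longrightarrow> fk y \<le> fk x"
  using fk_mono by (cases "x = y") (auto simp: less_le)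

lemma sum_lin: "(\<Sum>j\<in>J. l j * (a + b * x j - c * y j)) = a * sum l J + b * (\<Sum>j\<in>J. l j * x j) - c * (\<Sum>j\<in>J. l j * y j)"
  for l x y :: "'j \<Rightarrow> real"
  by (simp add: algebra_simps sum.distrib sum_subtractf sum_distrib_left)

lemma conv_comb_bounds:
  fixes l h :: "'j \<Rightarrow> real"
  assumes "\<forall>j\<in>J. l j \<ge> 0" "sum l J = 1" "\<forall>j\<in>J. m \<le> h j \<and> h j \<le> M"
  shows "m \<le> (\<Sum>j\<in>J. l j * h j) \<and> (\<Sum>j\<in>J. l j * h j) \<le> M"
proof -
  have "(\<Sum>j\<in>J. l j * m) \<le> (\<Sum>j\<in>J. l j * h j)" using assms by (intro sum_mono mult_left_mono) auto
  moreover have "(\<Sum>j\<in>J. l j * h j) \<le> (\<Sum>j\<in>J. l j * M)" using assms by (intro sum_mono mult_left_mono) auto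
  ultimately show ?thesis using assms(2) by (simp add: sum_distrib_right[symmetric])
qed

lemma disk:
  fixes l th :: "'j \<Rightarrow> real"
  assumes "finite J" "\<forall>j\<in>J. l j \<ge> 0" "sum l J = 1"
  shows "(\<Sum>j\<in>J. l j * sin (th j))^2 + (\<Sum>j\<in>J. l j * cos (th j))^2 \<le> 1"
proof -
  define Z where "Z = (\<Sum>j\<in>J. complex_of_real (l j) * cis (th j))"
  have "norm Z \<le> (\<Sum>j\<in>J. norm (complex_of_real (l j) * cis (th j)))"
    unfolding Z_def by (rule norm_sum)
  also have "\<dots> = (\<Sum>j\<in>J. l j)" using assms by (intro sum.cong) (auto simp: norm_mult)
  finally have n1: "norm Z \<le> 1" using assms by simp
  have re: "Re Z = (\<Sum>j\<in>J. l j * cos (th j))" unfolding Z_def by (simp add: Re_sum)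
  have im: "Im Z = (\<Sum>j\<in>J. l j * sin (th j))" unfolding Z_def by (simp add: Im_sum)
  have "(norm Z)^2 \<le> 1" using n1 norm_ge_zero[of Z] by (simp add: power_le_one)
  then show ?thesis using re im by (simp add: cmod_power2)
qed

lemma conv_i:
  fixes l th :: "'j \<Rightarrow> real"
  assumes J: "finite J" "\<forall>j\<in>J. l j \<ge> 0" "sum l J = 1" and th: "\<forall>j\<in>J. lo \<le> th j \<and> th j \<le> hi"
  shows "\<exists>t. lo \<le> t \<and> t \<le> hi \<and> fi t = (\<Sum>j\<in>J. l j * fi (th j)) \<and> fk t \<le> (\<Sum>j\<in>J. l j * fk (th j))"
proof -
  define tau where "tau = (\<Sum>j\<in>J. l j * fi (th j))"
  have "fi lo \<le> tau \<and> tau \<le> fi hi" unfolding tau_def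
    using th by (intro conv_comb_bounds J) (auto intro!: fi_le)
  then obtain t where t: "lo \<le> t" "t \<le> hi" "fi t = tau"
    using IVT'[of fi lo tau hi] lohi cont_fi by auto
  define S where "S = (\<Sum>j\<in>J. l j * sin (th j))"
  define K where "K = (\<Sum>j\<in>J. l j * cos (th j))"
  have SK: "S^2 + K^2 \<le> 1" unfolding S_def K_def by (rule disk[OF J])
  have e1: "tau = a1 + W * (B * S - G * K)" unfolding tau_def fi_def S_def K_def
    using sum_lin[of l "a1" "W * B" "\<lambda>j. sin (th j)" "W * G" "\<lambda>j. cos (th j)" J] J
    by (simp add: algebra_simps sum_distrib_left)
  have e2: "(\<Sum>j\<in>J. l j * fk (th j)) = a2 - W * (B * S + G * K)" unfolding fk_def S_def K_def
    using sum_lin[of l "a2" "W * B" "\<lambda>j. sin (th j)" "W * G" "\<lambda>j. cos (th j)" J] J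
    by (simp add: algebra_simps sum_distrib_left sum_subtractf sum.distrib)
  have "W * (B * sin t - G * cos t) = W * (B * S - G * K)"
    using t(3) e1 unfolding fi_def by (simp add: algebra_simps)
  then have m: "B * sin t - G * cos t = B * S - G * K" using W by simp
  have kt: "B * cos t + G * sin t > 0" using key t by auto
  have gc: "G * K \<le> G * cos t"
  proof (rule ccontr)
    assume "\<not> ?thesis"
    then have Gp: "G > 0" and cK: "cos t < K" using G by (auto simp: mult_le_cancel_left)
    define d where "d = K - cos t"
    have dp: "d > 0" using cK d_def by simp
    have "G * d = G * K - G * cos t" by (simp add: d_def algebra_simps)
    then have Sd: "B * S = B * sin t + G * d" using m by linarith
    have K': "K = cos t + d" by (simp add: d_def)
    have "B^2 * (S^2 + K^2) = (B*S)^2 + B^2 * K^2" by (simp add: power2_eq_square algebra_simps)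
    also have "\<dots> = (B * sin t + G * d)^2 + B^2 * (cos t + d)^2" using Sd K' by simp
    also have "\<dots> = B^2 * ((sin t)^2 + (cos t)^2) + 2 * d * B * (B * cos t + G * sin t) + d^2 * (G^2 + B^2)"
      by algebra
    also have "\<dots> = B^2 + 2 * d * B * (B * cos t + G * sin t) + d^2 * (G^2 + B^2)" by (simp only: sin_cos_squared_add mult_1_right)
    also have "\<dots> > B^2 * 1"
    proof -
      have "2 * d * B * (B * cos t + G * sin t) > 0" using dp kt B by simp
      moreover have "d^2 * (G^2 + B^2) \<ge> 0" by simp
      ultimately show ?thesis by linarith
    qed
    finally have "B^2 * (S^2 + K^2) > B^2 * 1" .
    moreover have "B^2 * (S^2 + K^2) \<le> B^2 * 1" using SK by (intro mult_left_mono) auto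
    ultimately show False by simp
  qed
  have "fk t = a2 - W * (B * sin t + G * cos t)" unfolding fk_def by (simp add: algebra_simps)
  also have "\<dots> \<le> a2 - W * (B * S + G * K)"
    using m gc W by (intro diff_left_mono mult_left_mono) auto
  finally show ?thesis using t e2 tau_def by auto
qed

lemma conv_k:
  fixes l th :: "'j \<Rightarrow> real"
  assumes J: "finite J" "\<forall>j\<in>J. l j \<ge> 0" "sum l J = 1" and th: "\<forall>j\<in>J. lo \<le> th j \<and> th j \<le> hi"
  shows "\<exists>t. lo \<le> t \<and> t \<le> hi \<and> fk t = (\<Sum>j\<in>J. l j * fk (th j)) \<and> fi t \<le> (\<Sum>j\<in>J. l j * fi (th j))"
proof -
  define tau where "tau = (\<Sum>j\<in>J. l j * fk (th j))"
  have "fk hi \<le> tau \<and> tau \<le> fk lo" unfolding tau_def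
    using th by (intro conv_comb_bounds J) (auto intro!: fk_le)
  then obtain t where t: "lo \<le> t" "t \<le> hi" "fk t = tau"
    using IVT2'[of fk hi tau lo] lohi cont_fk by auto
  define S where "S = (\<Sum>j\<in>J. l j * sin (th j))"
  define K where "K = (\<Sum>j\<in>J. l j * cos (th j))"
  have SK: "S^2 + K^2 \<le> 1" unfolding S_def K_def by (rule disk[OF J])
  have e1: "tau = a2 - W * (B * S + G * K)" unfolding tau_def fk_def S_def K_def
    using sum_lin[of l "a2" "W * B" "\<lambda>j. sin (th j)" "W * G" "\<lambda>j. cos (th j)" J] J
    by (simp add: algebra_simps sum_distrib_left sum_subtractf sum.distrib)
  have e2: "(\<Sum>j\<in>J. l j * fi (th j)) = a1 + W * (B * S - G * K)" unfolding fi_def S_def K_def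
    using sum_lin[of l "a1" "W * B" "\<lambda>j. sin (th j)" "W * G" "\<lambda>j. cos (th j)" J] J
    by (simp add: algebra_simps sum_distrib_left)
  have "W * (B * sin t + G * cos t) = W * (B * S + G * K)"
    using t(3) e1 unfolding fk_def by (simp add: algebra_simps)
  then have m: "B * sin t + G * cos t = B * S + G * K" using W by simp
  have kt: "B * cos t - G * sin t > 0" using key t by auto
  have gc: "G * K \<le> G * cos t"
  proof (rule ccontr)
    assume "\<not> ?thesis"
    then have Gp: "G > 0" and cK: "cos t < K" using G by (auto simp: mult_le_cancel_left)
    define d where "d = K - cos t"
    have dp: "d > 0" using cK d_def by simp
    have "G * d = G * K - G * cos t" by (simp add: d_def algebra_simps)
    then have Sd: "B * S = B * sin t - G * d" using m by linarith
    have K': "K = cos t + d" by (simp add: d_def)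
    have "B^2 * (S^2 + K^2) = (B*S)^2 + B^2 * K^2" by (simp add: power2_eq_square algebra_simps)
    also have "\<dots> = (B * sin t - G * d)^2 + B^2 * (cos t + d)^2" using Sd K' by simp
    also have "\<dots> = B^2 * ((sin t)^2 + (cos t)^2) + 2 * d * B * (B * cos t - G * sin t) + d^2 * (G^2 + B^2)"
      by algebra
    also have "\<dots> = B^2 + 2 * d * B * (B * cos t - G * sin t) + d^2 * (G^2 + B^2)" by (simp only: sin_cos_squared_add mult_1_right)
    also have "\<dots> > B^2 * 1"
    proof -
      have "2 * d * B * (B * cos t - G * sin t) > 0" using dp kt B by simp
      moreover have "d^2 * (G^2 + B^2) \<ge> 0" by simp
      ultimately show ?thesis by linarith
    qed
    finally have "B^2 * (S^2 + K^2) > B^2 * 1" .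
    moreover have "B^2 * (S^2 + K^2) \<le> B^2 * 1" using SK by (intro mult_left_mono) auto
    ultimately show False by simp
  qed
  have "B * sin t - G * cos t \<le> B * S - G * K" using m gc by linarith
  then have "W * (B * sin t - G * cos t) \<le> W * (B * S - G * K)" using W by (intro mult_left_mono) auto
  moreover have "fi t = a1 + W * (B * sin t - G * cos t)" unfolding fi_def by (simp add: algebra_simps)
  ultimately have "fi t \<le> a1 + W * (B * S - G * K)" by simp
  then show ?thesis using t e2 tau_def by auto
qed

end

definition Fe :: "('v \<Rightarrow> real) \<Rightarrow> ('v \<times> 'v \<Rightarrow> real) \<Rightarrow> ('v \<times> 'v \<Rightarrow> real) \<Rightarrow> 'v \<times> 'v \<Rightarrow> 'v \<Rightarrow> real \<Rightarrow> real" where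
  "Fe Vm g b e w t = (if w = fst e then flow_ik Vm g b (fst e) (snd e) t
      else if w = snd e then flow_ki Vm g b (fst e) (snd e) t else 0)"

definition ends :: "'v \<times> 'v \<Rightarrow> 'v \<Rightarrow> 'v \<Rightarrow> bool" where
  "ends e v u \<longleftrightarrow> (v = fst e \<and> u = snd e) \<or> (v = snd e \<and> u = fst e)"

locale net =
  fixes E :: "('v::finite \<times> 'v) set"
    and Vm :: "'v \<Rightarrow> real"
    and g b \<theta>lo \<theta>hi :: "'v \<times> 'v \<Rightarrow> real"
  assumes tree: "tree_network E"
    and Vpos: "\<forall>i. Vm i > 0"
    and gb_nonneg: "\<forall>e\<in>E. g e \<ge> 0 \<and> b e \<ge> 0"
    and y_nonzero: "\<forall>e\<in>E. g e \<noteq> 0 \<or> b e \<noteq> 0"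
    and angle_cond: "\<forall>e\<in>E. - atan_ratio (b e) (g e) < \<theta>lo e \<and> \<theta>lo e \<le> \<theta>hi e
                          \<and> \<theta>hi e < atan_ratio (b e) (g e)"
begin

abbreviation "F \<equiv> Fe Vm g b"

lemma noloop: "e \<in> E \<Longrightarrow> fst e \<noteq> snd e"
  using tree unfolding tree_network_def by auto

lemma edge_e: assumes e: "e \<in> E"
  shows "edge (Vm (fst e) * Vm (snd e)) (b e) (g e) (\<theta>lo e) (\<theta>hi e)"
proof -
  have k: "b e * cos t + g e * sin t > 0 \<and> b e * cos t - g e * sin t > 0 \<and> b e > 0"
    if "\<theta>lo e \<le> t" "t \<le> \<theta>hi e" for t
    using key_ineq[of "g e" "b e" "\<theta>lo e" "\<theta>hi e" t] e gb_nonneg y_nonzero angle_cond that by auto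
  show ?thesis
  proof
    show "0 < Vm (fst e) * Vm (snd e)" using Vpos by simp
    show "0 < b e" using k[of "\<theta>lo e"] angle_cond e by auto
    show "0 \<le> g e" using gb_nonneg e by auto
    show "\<theta>lo e \<le> \<theta>hi e" using angle_cond e by auto
  qed (use k in auto)
qed

lemma F_fst: "e \<in> E \<Longrightarrow> F e (fst e) = edge.fi ((Vm (fst e))\<^sup>2 * g e) (Vm (fst e) * Vm (snd e)) (b e) (g e)"
  by (rule ext) (simp add: Fe_def edge.fi_def[OF edge_e] flow_ik_def algebra_simps)

lemma F_snd: "e \<in> E \<Longrightarrow> F e (snd e) = edge.fk ((Vm (snd e))\<^sup>2 * g e) (Vm (fst e) * Vm (snd e)) (b e) (g e)"
  using noloop[of e] by (intro ext) (simp add: Fe_def edge.fk_def[OF edge_e] flow_ki_def algebra_simps)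

lemma F_other: "w \<noteq> fst e \<Longrightarrow> w \<noteq> snd e \<Longrightarrow> F e w t = 0"
  by (simp add: Fe_def)


lemma F_cont: "continuous_on S (F e w)"
  unfolding Fe_def flow_ik_def flow_ki_def by (cases "w = fst e"; cases "w = snd e") (auto intro!: continuous_intros)

lemma fi_strict: "e \<in> E \<Longrightarrow> \<theta>lo e \<le> x \<Longrightarrow> x < y \<Longrightarrow> y \<le> \<theta>hi e \<Longrightarrow> F e (fst e) x < F e (fst e) y"
  using edge.fi_mono[OF edge_e] F_fst by metis
lemma fk_strict: "e \<in> E \<Longrightarrow> \<theta>lo e \<le> x \<Longrightarrow> x < y \<Longrightarrow> y \<le> \<theta>hi e \<Longrightarrow> F e (snd e) y < F e (snd e) x"
  using edge.fk_mono[OF edge_e] F_snd by metis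

lemma iface_strict:
  assumes e: "e \<in> E" and vu: "ends e v u" and x: "\<theta>lo e \<le> x" "x \<le> \<theta>hi e" and y: "\<theta>lo e \<le> y" "y \<le> \<theta>hi e"
    and lt: "F e v x < F e v y"
  shows "F e u y < F e u x"
proof (cases "v = fst e \<and> u = snd e")
  case True
  have "x < y"
  proof (rule ccontr)
    assume "\<not> x < y" then have "y \<le> x" by simp
    then have "F e v y \<le> F e v x" using fi_strict[OF e y(1) _ x(2)] True by (cases "y = x") (auto simp: less_le)
    then show False using lt by simp
  qed
  then show ?thesis using fk_strict[OF e x(1) _ y(2)] True by auto
next
  case False
  then have vu': "v = snd e" "u = fst e" using vu unfolding ends_def by auto
  have "y < x"
  proof (rule ccontr)
    assume "\<not> y < x" then have "x \<le> y" by simp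
    then have "F e v y \<le> F e v x" using fk_strict[OF e x(1) _ y(2)] vu' by (cases "y = x") (auto simp: less_le)
    then show False using lt by simp
  qed
  then show ?thesis using fi_strict[OF e y(1) _ x(2)] vu' by auto
qed

lemma iface_inj:
  assumes e: "e \<in> E" and v: "v = fst e \<or> v = snd e" and x: "\<theta>lo e \<le> x" "x \<le> \<theta>hi e" and y: "\<theta>lo e \<le> y" "y \<le> \<theta>hi e"
    and eq: "F e v x = F e v y"
  shows "x = y"
proof (rule ccontr)
  assume ne: "x \<noteq> y"
  show False
  proof (cases "x < y")
    case True
    then show False using fi_strict[OF e x(1) True y(2)] fk_strict[OF e x(1) True y(2)] v eq by auto
  next
    case False
    then have "y < x" using ne by simp
    then show False using fi_strict[OF e y(1) _ x(2)] fk_strict[OF e y(1) _ x(2)] v eq by auto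
  qed
qed

lemma iface_between:
  assumes e: "e \<in> E" and v: "v = fst e \<or> v = snd e" and r: "\<theta>lo e \<le> x" "x \<le> y" "y \<le> z" "z \<le> \<theta>hi e"
  shows "min (F e v x) (F e v z) \<le> F e v y \<and> F e v y \<le> max (F e v x) (F e v z)"
proof -
  have i1: "F e (fst e) x \<le> F e (fst e) y" "F e (fst e) y \<le> F e (fst e) z"
    using fi_strict[OF e, of x y] fi_strict[OF e, of y z] r by (auto simp: le_less)
  have i2: "F e (snd e) y \<le> F e (snd e) x" "F e (snd e) z \<le> F e (snd e) y"
    using fk_strict[OF e, of x y] fk_strict[OF e, of y z] r by (auto simp: le_less)
  show ?thesis using v i1 i2 by auto
qed

lemma iface_conv:
  fixes l th :: "'j \<Rightarrow> real"
  assumes e: "e \<in> E" and vu: "ends e v u"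
    and J: "finite J" "\<forall>j\<in>J. l j \<ge> 0" "sum l J = 1" and th: "\<forall>j\<in>J. \<theta>lo e \<le> th j \<and> th j \<le> \<theta>hi e"
  shows "\<exists>t. \<theta>lo e \<le> t \<and> t \<le> \<theta>hi e \<and> F e v t = (\<Sum>j\<in>J. l j * F e v (th j)) \<and> F e u t \<le> (\<Sum>j\<in>J. l j * F e u (th j))"
proof (cases "v = fst e \<and> u = snd e")
  case True
  show ?thesis using edge.conv_i[OF edge_e[OF e] J th] True F_fst[OF e] F_snd[OF e] by simp
next
  case False
  then have vu': "v = snd e" "u = fst e" using vu unfolding ends_def by auto
  show ?thesis using edge.conv_k[OF edge_e[OF e] J th] vu' F_fst[OF e] F_snd[OF e] by simp
qed


definition pinj where "pinj C Th w = (\<Sum>e\<in>C. F e w (Th e))"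
definition inr where "inr C Th \<longleftrightarrow> (\<forall>e\<in>C. \<theta>lo e \<le> Th e \<and> Th e \<le> \<theta>hi e)"

lemma pinj_remove: "finite C \<Longrightarrow> e \<in> C \<Longrightarrow> pinj C Th w = pinj (C - {e}) Th w + F e w (Th e)"
  unfolding pinj_def by (simp add: sum.remove)

lemma pinj_zero: "\<forall>e'\<in>C. w \<noteq> fst e' \<and> w \<noteq> snd e' \<Longrightarrow> pinj C Th w = 0"
  unfolding pinj_def by (auto intro!: sum.neutral simp: F_other)

lemma pinj_cong: "\<forall>e\<in>C. Th e = Th' e \<Longrightarrow> pinj C Th w = pinj C Th' w"
  unfolding pinj_def by (auto intro!: sum.cong)

lemma leaf:
  assumes "C \<subseteq> E" "C \<noteq> {}"
  obtains e v u where "e \<in> C" "ends e v u" "u \<noteq> v" "\<forall>e'\<in>C - {e}. v \<noteq> fst e' \<and> v \<noteq> snd e'"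
    "\<And>w t. w \<noteq> u \<Longrightarrow> w \<noteq> v \<Longrightarrow> F e w t = 0"
proof -
  obtain e v where e: "e \<in> C" "v = fst e \<or> v = snd e" and uq: "\<forall>e'\<in>C. (v = fst e' \<or> v = snd e') \<longrightarrow> e' = e"
    using tree_leaf[OF tree assms] by blast
  define u where "u = (if v = fst e then snd e else fst e)"
  have nl: "fst e \<noteq> snd e" using noloop e assms by auto
  have "ends e v u" using e nl unfolding ends_def u_def by auto
  moreover have "u \<noteq> v" using nl u_def by auto
  moreover have "\<forall>e'\<in>C - {e}. v \<noteq> fst e' \<and> v \<noteq> snd e'" using uq by auto
  moreover have "\<And>w t. w \<noteq> u \<Longrightarrow> w \<noteq> v \<Longrightarrow> F e w t = 0"
    using e u_def by (auto intro: F_other)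
  ultimately show ?thesis using that e by blast
qed

lemma ends_mem: "ends e v u \<Longrightarrow> (v = fst e \<or> v = snd e) \<and> (u = fst e \<or> u = snd e)"
  unfolding ends_def by auto

lemma claimU:
  assumes "finite C" "C \<subseteq> E" "inr C Th" "inr C Th'" "\<forall>w. pinj C Th' w \<le> pinj C Th w"
  shows "\<forall>e\<in>C. Th' e = Th e"
  using assms
proof (induction C rule: finite_psubset_induct)
  case (psubset C)
  show ?case
  proof (cases "C = {}")
    case True then show ?thesis by simp
  next
    case False
    obtain e v u where e: "e \<in> C" "ends e v u" "u \<noteq> v" and vC': "\<forall>e'\<in>C - {e}. v \<noteq> fst e' \<and> v \<noteq> snd e'"
      and oth: "\<And>w t. w \<noteq> u \<Longrightarrow> w \<noteq> v \<Longrightarrow> F e w t = 0"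
      using leaf[OF psubset.prems(1) False] by blast
    define C' where "C' = C - {e}"
    have eE: "e \<in> E" using e psubset.prems by auto
    have r1: "\<theta>lo e \<le> Th e" "Th e \<le> \<theta>hi e" using psubset.prems(2) e unfolding inr_def by auto
    have r2: "\<theta>lo e \<le> Th' e" "Th' e \<le> \<theta>hi e" using psubset.prems(3) e unfolding inr_def by auto
    have rem: "pinj C X w = pinj C' X w + F e w (X e)" for X w
      unfolding C'_def by (rule pinj_remove[OF psubset.hyps(1) e(1)])
    have z: "pinj C' X v = 0" for X unfolding C'_def by (rule pinj_zero[OF vC'])
    have "pinj C Th' v \<le> pinj C Th v" using psubset.prems(4) by blast
    then have "F e v (Th' e) \<le> F e v (Th e)" by (simp add: rem z)
    then have psi1: "F e u (Th e) \<le> F e u (Th' e)"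
    proof (cases "F e v (Th' e) < F e v (Th e)")
      case True then show ?thesis using iface_strict[OF eE e(2) r2 r1] by simp
    next
      case False
      then have "F e v (Th' e) = F e v (Th e)" using \<open>F e v (Th' e) \<le> F e v (Th e)\<close> by simp
      then have "Th' e = Th e" using iface_inj[OF eE _ r2 r1] ends_mem[OF e(2)] by blast
      then show ?thesis by simp
    qed
    have red: "\<forall>w. pinj C' Th' w \<le> pinj C' Th w"
    proof
      fix w
      consider "w = u" | "w = v" | "w \<noteq> u" "w \<noteq> v" by blast
      then show "pinj C' Th' w \<le> pinj C' Th w"
      proof cases
        case 1
        have "pinj C Th' u \<le> pinj C Th u" using psubset.prems(4) by blast
        then show ?thesis unfolding 1 using rem[of Th' u] rem[of Th u] psi1 by linarith
      next
        case 2 then show ?thesis using z by simp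
      next
        case 3
        have "pinj C Th' w \<le> pinj C Th w" using psubset.prems(4) by blast
        then show ?thesis using rem[of Th' w] rem[of Th w] oth[OF 3] by simp
      qed
    qed
    have C'C: "C' \<subset> C" using e(1) unfolding C'_def by auto
    have s1: "C' \<subseteq> E" using C'C psubset.prems(1) by auto
    have s2: "inr C' Th" "inr C' Th'" using C'C psubset.prems(2,3) unfolding inr_def by auto
    have IH: "\<forall>e\<in>C'. Th' e = Th e"
      by (rule psubset.IH[OF C'C s1 s2 red])
    have "pinj C' Th' u = pinj C' Th u" using IH by (intro pinj_cong) auto
    moreover have "pinj C Th' u \<le> pinj C Th u" using psubset.prems(4) by blast
    ultimately have "F e u (Th' e) \<le> F e u (Th e)" using rem[of Th' u] rem[of Th u] by linarith
    then have "F e u (Th' e) = F e u (Th e)" using psi1 by simp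
    then have "Th' e = Th e" using iface_inj[OF eE _ r2 r1] ends_mem[OF e(2)] by blast
    then show ?thesis using IH unfolding C'_def by auto
  qed
qed


lemma wsum_le:
  fixes l a c :: "'j \<Rightarrow> real"
  assumes "\<forall>j\<in>J. l j \<ge> 0" "\<forall>j\<in>J. a j \<le> c j"
  shows "(\<Sum>j\<in>J. l j * a j) \<le> (\<Sum>j\<in>J. l j * c j)"
  using assms by (intro sum_mono mult_left_mono) auto

lemma wsum_const: "sum l J = 1 \<Longrightarrow> (\<Sum>j\<in>J. l j * (c::real)) = c"
  by (simp add: sum_distrib_right[symmetric])

lemma wsum_diff: "(\<Sum>j\<in>J. l j * (a j - c j)) = (\<Sum>j\<in>J. l j * a j) - (\<Sum>j\<in>J. l j * (c j::real))"
  by (simp add: right_diff_distrib sum_subtractf)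

lemma claimE:
  fixes l :: "'j \<Rightarrow> real" and Th :: "'j \<Rightarrow> 'v \<times> 'v \<Rightarrow> real"
  assumes "finite C" "C \<subseteq> E" and J: "finite J" "\<forall>j\<in>J. l j \<ge> 0" "sum l J = 1"
    and "\<forall>j\<in>J. inr C (Th j)"
    and "\<forall>j\<in>J. \<forall>w. lo w \<le> pinj C (Th j) w" "\<forall>w. (\<Sum>j\<in>J. l j * pinj C (Th j) w) \<le> z w"
  shows "\<exists>X. inr C X \<and> (\<forall>w. lo w \<le> pinj C X w \<and> pinj C X w \<le> z w)"
  using assms(1,2,6-)
proof (induction C arbitrary: lo z rule: finite_psubset_induct)
  case (psubset C)
  have Jne: "J \<noteq> {}" using J(3) by auto
  have lz: "lo w \<le> z w" for w
  proof -
    have "lo w = (\<Sum>j\<in>J. l j * lo w)" using wsum_const[OF J(3)] by simp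
    also have "\<dots> \<le> (\<Sum>j\<in>J. l j * pinj C (Th j) w)" using psubset.prems(3) J(2) by (intro wsum_le) auto
    also have "\<dots> \<le> z w" using psubset.prems(4) by blast
    finally show ?thesis .
  qed
  show ?case
  proof (cases "C = {}")
    case True
    have p0: "pinj C X w = 0" for X w unfolding pinj_def True by simp
    have "0 \<le> z w" for w
    proof -
      have "(\<Sum>j\<in>J. l j * pinj C (Th j) w) \<le> z w" using psubset.prems(4) by blast
      then show ?thesis by (simp add: p0)
    qed
    moreover have "lo w \<le> 0" for w
    proof -
      obtain j where "j \<in> J" using Jne by blast
      then have "lo w \<le> pinj C (Th j) w" using psubset.prems(3) by blast
      then show ?thesis by (simp add: p0)
    qed
    ultimately show ?thesis using p0 unfolding inr_def True by auto
  next
    case False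
    obtain e v u where e: "e \<in> C" "ends e v u" "u \<noteq> v" and vC': "\<forall>e'\<in>C - {e}. v \<noteq> fst e' \<and> v \<noteq> snd e'"
      and oth: "\<And>w t. w \<noteq> u \<Longrightarrow> w \<noteq> v \<Longrightarrow> F e w t = 0"
      using leaf[OF psubset.prems(1) False] by blast
    define C' where "C' = C - {e}"
    have eE: "e \<in> E" using e psubset.prems by auto
    have vmem: "v = fst e \<or> v = snd e" and umem: "u = fst e \<or> u = snd e" using ends_mem[OF e(2)] by auto
    have rng: "\<theta>lo e \<le> Th j e" "Th j e \<le> \<theta>hi e" if "j \<in> J" for j
      using psubset.prems(2) e that unfolding inr_def by auto
    have rem: "pinj C X w = pinj C' X w + F e w (X e)" for X w
      unfolding C'_def by (rule pinj_remove[OF psubset.hyps(1) e(1)])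
    have zv: "pinj C' X v = 0" for X unfolding C'_def by (rule pinj_zero[OF vC'])
    have rv: "pinj C X v = F e v (X e)" for X using rem[of X v] zv by simp
    define phi where "phi j = F e v (Th j e)" for j
    define psi where "psi j = F e u (Th j e)" for j
    obtain ts where ts: "\<theta>lo e \<le> ts" "ts \<le> \<theta>hi e" "F e v ts = (\<Sum>j\<in>J. l j * phi j)"
        "F e u ts \<le> (\<Sum>j\<in>J. l j * psi j)"
      using iface_conv[OF eE e(2) J, of "\<lambda>j. Th j e"] rng unfolding phi_def psi_def by blast
    obtain j0 where j0: "j0 \<in> J" "\<forall>j\<in>J. phi j0 \<le> phi j"
    proof -
      have "Min (phi ` J) \<in> phi ` J" using J(1) Jne by simp
      then obtain j0 where "j0 \<in> J" "phi j0 = Min (phi ` J)" by auto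
      moreover have "\<forall>j\<in>J. Min (phi ` J) \<le> phi j" using J(1) by simp
      ultimately show ?thesis using that by metis
    qed
    have avgv: "(\<Sum>j\<in>J. l j * phi j) \<le> z v"
    proof -
      have "(\<Sum>j\<in>J. l j * pinj C (Th j) v) \<le> z v" using psubset.prems(4) by blast
      then show ?thesis by (simp add: rv phi_def)
    qed
    have lov: "lo v \<le> phi j0"
    proof -
      have "lo v \<le> pinj C (Th j0) v" using psubset.prems(3) j0(1) by blast
      then show ?thesis by (simp add: rv phi_def)
    qed
    have p0avg: "phi j0 \<le> (\<Sum>j\<in>J. l j * phi j)"
      using wsum_le[OF J(2), of "\<lambda>j. phi j0" phi] j0(2) wsum_const[OF J(3)] by simp
    have psi_le: "F e u y \<le> psi j0" if y: "\<theta>lo e \<le> y" "y \<le> \<theta>hi e" "phi j0 \<le> F e v y" for y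
    proof (cases "phi j0 < F e v y")
      case True then show ?thesis using iface_strict[OF eE e(2) rng[OF j0(1)] y(1,2)] unfolding phi_def psi_def by (meson less_imp_le)
    next
      case False
      then have "F e v (Th j0 e) = F e v y" using y(3) unfolding phi_def by simp
      then have "Th j0 e = y" using iface_inj[OF eE vmem _ _ y(1,2)] rng[OF j0(1)] by blast
      then show ?thesis unfolding psi_def by simp
    qed
    define A where "A = F e u ts"
    define B where "B = psi j0"
    have AB: "A \<le> B" unfolding A_def B_def using psi_le[OF ts(1,2)] ts(3) p0avg by simp
    have psiB: "psi j \<le> B" if "j \<in> J" for j
    proof -
      have "phi j0 \<le> F e v (Th j e)" using j0(2) that unfolding phi_def by blast
      then show ?thesis using psi_le[of "Th j e"] rng[OF that] unfolding B_def psi_def by blast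
    qed
    define lo' where "lo' = (lo(u := lo u - B))(v := 0)"
    define z' where "z' = (z(u := z u - A))(v := 0)"
    have C'C: "C' \<subset> C" using e(1) unfolding C'_def by auto
    have s1: "C' \<subseteq> E" using C'C psubset.prems(1) by auto
    have s2: "\<forall>j\<in>J. inr C' (Th j)" using C'C psubset.prems(2) unfolding inr_def by blast
    have s3: "\<forall>j\<in>J. \<forall>w. lo' w \<le> pinj C' (Th j) w"
    proof (intro ballI allI)
      fix j w assume j: "j \<in> J"
      have h: "lo w \<le> pinj C (Th j) w" using psubset.prems(3) j by blast
      consider "w = v" | "w = u" | "w \<noteq> u" "w \<noteq> v" by blast
      then show "lo' w \<le> pinj C' (Th j) w"
      proof cases
        case 1 then show ?thesis using zv unfolding lo'_def by simp
      next
        case 2 then show ?thesis using h rem[of "Th j" u] psiB[OF j] e(3) unfolding lo'_def psi_def by simp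
      next
        case 3 then show ?thesis using h rem[of "Th j" w] oth[OF 3] unfolding lo'_def by simp
      qed
    qed
    have s4: "\<forall>w. (\<Sum>j\<in>J. l j * pinj C' (Th j) w) \<le> z' w"
    proof
      fix w
      have h: "(\<Sum>j\<in>J. l j * pinj C (Th j) w) \<le> z w" using psubset.prems(4) by blast
      consider "w = v" | "w = u" | "w \<noteq> u" "w \<noteq> v" by blast
      then show "(\<Sum>j\<in>J. l j * pinj C' (Th j) w) \<le> z' w"
      proof cases
        case 1 then show ?thesis using zv unfolding z'_def by simp
      next
        case 2
        have "(\<Sum>j\<in>J. l j * pinj C' (Th j) u) = (\<Sum>j\<in>J. l j * (pinj C (Th j) u - psi j))"
          using rem unfolding psi_def by (intro sum.cong) (auto simp: algebra_simps)
        also have "\<dots> = (\<Sum>j\<in>J. l j * pinj C (Th j) u) - (\<Sum>j\<in>J. l j * psi j)" by (rule wsum_diff)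
        finally show ?thesis using 2 h ts(4) e(3) unfolding z'_def A_def by simp
      next
        case 3
        have "(\<Sum>j\<in>J. l j * pinj C' (Th j) w) = (\<Sum>j\<in>J. l j * pinj C (Th j) w)"
          using rem oth[OF 3] by (intro sum.cong) auto
        then show ?thesis using h 3 unfolding z'_def by simp
      qed
    qed
    obtain X' where X': "inr C' X'" "\<forall>w. lo' w \<le> pinj C' X' w \<and> pinj C' X' w \<le> z' w"
      using psubset.IH[OF C'C s1 s2 s3 s4] by blast
    define R where "R = pinj C' X' u"
    have R1: "lo u - B \<le> R"
    proof -
      have "lo' u \<le> pinj C' X' u" using X'(2) by blast
      then show ?thesis using e(3) unfolding R_def lo'_def by simp
    qed
    have R2: "R \<le> z u - A"
    proof -
      have "pinj C' X' u \<le> z' u" using X'(2) by blast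
      then show ?thesis using e(3) unfolding R_def z'_def by simp
    qed
    define t where "t = max A (lo u - R)"
    have tA: "A \<le> t" "t \<le> B" "lo u - R \<le> t" "t \<le> z u - R"
      using AB R1 R2 lz[of u] unfolding t_def by auto
    have cont: "continuous_on S (F e u)" for S by (rule F_cont)
    obtain te where te: "min ts (Th j0 e) \<le> te" "te \<le> max ts (Th j0 e)" "F e u te = t"
    proof (cases "ts \<le> Th j0 e")
      case True
      obtain x where "ts \<le> x" "x \<le> Th j0 e" "F e u x = t"
        using IVT'[of "F e u" ts t "Th j0 e", OF _ _ True cont] tA unfolding A_def B_def psi_def by auto
      then show ?thesis using that True by auto
    next
      case False
      then have le: "Th j0 e \<le> ts" by simp
      obtain x where "Th j0 e \<le> x" "x \<le> ts" "F e u x = t"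
        using IVT2'[of "F e u" ts t "Th j0 e", OF _ _ le cont] tA unfolding A_def B_def psi_def by auto
      then show ?thesis using that le by auto
    qed
    have ter: "\<theta>lo e \<le> te" "te \<le> \<theta>hi e" using te ts rng[OF j0(1)] by auto
    have tev: "lo v \<le> F e v te \<and> F e v te \<le> z v"
    proof (cases "ts \<le> Th j0 e")
      case True
      then show ?thesis using iface_between[OF eE vmem ts(1), of te "Th j0 e"] te rng[OF j0(1)] ts lov p0avg avgv
        unfolding phi_def by auto
    next
      case False
      then show ?thesis using iface_between[OF eE vmem, of "Th j0 e" te ts] te rng[OF j0(1)] ts lov p0avg avgv
        unfolding phi_def by auto
    qed
    define X where "X = X'(e := te)"
    have eC': "e \<notin> C'" unfolding C'_def by simp
    have pX: "pinj C' X w = pinj C' X' w" for w using eC' unfolding X_def by (intro pinj_cong) auto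
    have pC: "pinj C X w = pinj C' X' w + F e w te" for w using rem[of X w] pX[of w] unfolding X_def by simp
    have inrX: "inr C X" using X'(1) ter unfolding inr_def X_def C'_def by auto
    have bounds: "lo w \<le> pinj C X w \<and> pinj C X w \<le> z w" for w
    proof -
      consider "w = v" | "w = u" | "w \<noteq> u" "w \<noteq> v" by blast
      then show ?thesis
      proof cases
        case 1 then show ?thesis using pC[of v] zv[of X'] tev by simp
      next
        case 2 then show ?thesis using pC[of u] te(3) tA unfolding R_def by simp
      next
        case 3
        have "lo' w \<le> pinj C' X' w \<and> pinj C' X' w \<le> z' w" using X'(2) by blast
        moreover have "lo' w = lo w" "z' w = z w" using 3 unfolding lo'_def z'_def by auto
        ultimately show ?thesis using pC[of w] oth[OF 3] by simp
      qed
    qed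
    show ?thesis using inrX bounds by blast
  qed
qed

end

context net begin

definition flowvec :: "('v \<times> 'v \<Rightarrow> real) \<Rightarrow> real ^ ('v \<times> 'v)" where
  "flowvec Th = (\<chi> p. if p \<in> E then flow_ik Vm g b (fst p) (snd p) (Th p)
     else if (snd p, fst p) \<in> E then flow_ki Vm g b (snd p) (fst p) (Th (snd p, fst p)) else 0)"

lemma antisym: "(i,k) \<in> E \<Longrightarrow> (k,i) \<notin> E"
  using tree unfolding tree_network_def by auto

lemma fr_iff: "f \<in> flow_region E Vm g b \<theta>lo \<theta>hi \<longleftrightarrow> (\<exists>Th. inr E Th \<and> f = flowvec Th)"
proof
  assume f: "f \<in> flow_region E Vm g b \<theta>lo \<theta>hi"
  define P where "P e t \<longleftrightarrow> \<theta>lo e \<le> t \<and> t \<le> \<theta>hi e \<and> f $ e = flow_ik Vm g b (fst e) (snd e) t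
      \<and> f $ (snd e, fst e) = flow_ki Vm g b (fst e) (snd e) t" for e t
  define Th where "Th e = (SOME t. P e t)" for e
  have ex: "\<exists>t. P e t" if "e \<in> E" for e
    using f that unfolding flow_region_def P_def by (cases e) auto
  have PT: "P e (Th e)" if "e \<in> E" for e unfolding Th_def using ex[OF that] by (rule someI_ex)
  have z: "p \<notin> dir_edges E \<Longrightarrow> f $ p = 0" for p using f unfolding flow_region_def by blast
  have "f = flowvec Th"
  proof (subst vec_eq_iff, intro allI)
    fix p :: "'v \<times> 'v"
    show "f $ p = flowvec Th $ p"
    proof (cases "p \<in> E")
      case True then show ?thesis using PT[OF True] unfolding flowvec_def P_def by simp
    next
      case False
      show ?thesis
      proof (cases "(snd p, fst p) \<in> E")
        case True
        then show ?thesis using PT[OF True] False unfolding flowvec_def P_def by simp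
      next
        case False2: False
        then have "p \<notin> dir_edges E" using False unfolding dir_edges_def by (cases p) auto
        then show ?thesis using z False False2 unfolding flowvec_def by simp
      qed
    qed
  qed
  moreover have "inr E Th" using PT unfolding inr_def P_def by auto
  ultimately show "\<exists>Th. inr E Th \<and> f = flowvec Th" by blast
next
  assume "\<exists>Th. inr E Th \<and> f = flowvec Th"
  then obtain Th where Th: "inr E Th" "f = flowvec Th" by blast
  show "f \<in> flow_region E Vm g b \<theta>lo \<theta>hi"
    unfolding flow_region_def
  proof (intro CollectI conjI allI impI ballI)
    fix e assume "e \<notin> dir_edges E"
    then show "f $ e = 0" unfolding Th(2) flowvec_def dir_edges_def by (cases e) auto
  next
    fix p assume p: "p \<in> E"
    obtain i k where ik: "p = (i,k)" by (cases p)
    have "(k,i) \<notin> E" using antisym p ik by auto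
    then show "case p of (i, k) \<Rightarrow> \<exists>\<theta>\<ge>\<theta>lo (i, k). \<theta> \<le> \<theta>hi (i, k) \<and>
        f $ (i, k) = flow_ik Vm g b i k \<theta> \<and> f $ (k, i) = flow_ki Vm g b i k \<theta>"
      using Th p ik unfolding inr_def flowvec_def by auto
  qed
qed

lemma flowvec_cong: "\<forall>e\<in>E. Th e = Th' e \<Longrightarrow> flowvec Th = flowvec Th'"
  unfolding flowvec_def by (auto simp: vec_eq_iff)

lemma inj_flowvec: "inj_map E (flowvec Th) $ w = pinj E Th w"
proof -
  define K1 where "K1 = {k. (w,k) \<in> E}"
  define K2 where "K2 = {k. (k,w) \<in> E}"
  have fin: "finite K1" "finite K2" by auto
  have dis: "K1 \<inter> K2 = {}" using antisym unfolding K1_def K2_def by auto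
  have un: "{k. (w,k) \<in> dir_edges E} = K1 \<union> K2" unfolding K1_def K2_def dir_edges_def by auto
  have "inj_map E (flowvec Th) $ w = (\<Sum>k\<in>K1 \<union> K2. flowvec Th $ (w,k))"
    unfolding inj_map_def using un by simp
  also have "\<dots> = (\<Sum>k\<in>K1. flowvec Th $ (w,k)) + (\<Sum>k\<in>K2. flowvec Th $ (w,k))"
    by (rule sum.union_disjoint[OF fin dis])
  also have "(\<Sum>k\<in>K1. flowvec Th $ (w,k)) = (\<Sum>k\<in>K1. flow_ik Vm g b w k (Th (w,k)))"
    unfolding K1_def flowvec_def by (intro sum.cong) auto
  also have "(\<Sum>k\<in>K2. flowvec Th $ (w,k)) = (\<Sum>k\<in>K2. flow_ki Vm g b k w (Th (k,w)))"
    unfolding K2_def flowvec_def using antisym by (intro sum.cong) auto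
  also have "(\<Sum>k\<in>K1. flow_ik Vm g b w k (Th (w,k))) = (\<Sum>e\<in>{e\<in>E. fst e = w}. flow_ik Vm g b (fst e) (snd e) (Th e))"
  proof -
    have "{e\<in>E. fst e = w} = (\<lambda>k. (w,k)) ` K1" unfolding K1_def by force
    moreover have "inj_on (\<lambda>k. (w,k)) K1" by (auto intro: inj_onI)
    ultimately show ?thesis by (simp add: sum.reindex)
  qed
  also have "(\<Sum>k\<in>K2. flow_ki Vm g b k w (Th (k,w))) = (\<Sum>e\<in>{e\<in>E. snd e = w}. flow_ki Vm g b (fst e) (snd e) (Th e))"
  proof -
    have "{e\<in>E. snd e = w} = (\<lambda>k. (k,w)) ` K2" unfolding K2_def by force
    moreover have "inj_on (\<lambda>k. (k,w)) K2" by (auto intro: inj_onI)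
    ultimately show ?thesis by (simp add: sum.reindex)
  qed
  also have "(\<Sum>e\<in>{e\<in>E. fst e = w}. flow_ik Vm g b (fst e) (snd e) (Th e)) + (\<Sum>e\<in>{e\<in>E. snd e = w}. flow_ki Vm g b (fst e) (snd e) (Th e))
      = (\<Sum>e\<in>E. (if fst e = w then flow_ik Vm g b (fst e) (snd e) (Th e) else 0)) + (\<Sum>e\<in>E. (if snd e = w then flow_ki Vm g b (fst e) (snd e) (Th e) else 0))"
    by (simp only: sum.inter_filter[OF finite])
  also have "\<dots> = pinj E Th w"
    unfolding pinj_def sum.distrib[symmetric] using noloop by (intro sum.cong) (force simp: Fe_def)+
  finally show ?thesis .
qed

end

context net begin

lemma dom:
  assumes f: "f \<in> flow_region E Vm g b \<theta>lo \<theta>hi" and f': "f' \<in> flow_region E Vm g b \<theta>lo \<theta>hi"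
    and le: "\<forall>i. inj_map E f' $ i \<le> inj_map E f $ i"
  shows "f' = f"
proof -
  obtain Th where Th: "inr E Th" "f = flowvec Th" using f fr_iff by blast
  obtain Th' where Th': "inr E Th'" "f' = flowvec Th'" using f' fr_iff by blast
  have "\<forall>w. pinj E Th' w \<le> pinj E Th w" using le Th(2) Th'(2) by (simp add: inj_flowvec)
  then have "\<forall>e\<in>E. Th' e = Th e" using claimU[OF _ _ Th(1) Th'(1)] by simp
  then show ?thesis using Th(2) Th'(2) flowvec_cong by metis
qed

lemma below:
  assumes z: "z \<in> convex hull (inj_region_theta E Vm g b \<theta>lo \<theta>hi \<inter> inj_region_P Plo Phi)"
  shows "\<exists>w\<in>inj_region_theta E Vm g b \<theta>lo \<theta>hi \<inter> inj_region_P Plo Phi. \<forall>i. w $ i \<le> z $ i"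
proof -
  let ?P = "inj_region_theta E Vm g b \<theta>lo \<theta>hi \<inter> inj_region_P Plo Phi"
  obtain S u where S: "finite S" "S \<subseteq> ?P" "\<forall>x\<in>S. 0 \<le> u x" "sum u S = 1" "(\<Sum>v\<in>S. u v *\<^sub>R v) = z"
    using z unfolding convex_hull_explicit by blast
  define ThS where "ThS y = (SOME Th. inr E Th \<and> y = inj_map E (flowvec Th))" for y
  have ThS: "inr E (ThS y) \<and> y = inj_map E (flowvec (ThS y))" if yS: "y \<in> S" for y
  proof -
    have "y \<in> inj_region_theta E Vm g b \<theta>lo \<theta>hi" using S(2) yS by blast
    then obtain f where f: "f \<in> flow_region E Vm g b \<theta>lo \<theta>hi" "y = inj_map E f"
      unfolding inj_region_theta_def by blast
    obtain Th where Th: "inr E Th" "f = flowvec Th" using fr_iff[THEN iffD1, OF f(1)] by blast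
    have "\<exists>Th. inr E Th \<and> y = inj_map E (flowvec Th)" using Th f(2) by blast
    then show ?thesis unfolding ThS_def by (rule someI_ex)
  qed
  have pv: "pinj E (ThS y) w = y $ w" if yS: "y \<in> S" for y w
  proof -
    have e: "y = inj_map E (flowvec (ThS y))" using ThS[OF yS] by blast
    have "y $ w = inj_map E (flowvec (ThS y)) $ w" using e by (rule arg_cong)
    also have "\<dots> = pinj E (ThS y) w" by (rule inj_flowvec)
    finally show ?thesis by (rule sym)
  qed
  have zc: "z $ w = (\<Sum>y\<in>S. u y * y $ w)" for w
  proof -
    have "z $ w = (\<Sum>v\<in>S. u v *\<^sub>R v) $ w" using S(5) by simp
    then show ?thesis by simp
  qed
  obtain X where X: "inr E X" "\<forall>w. Plo w \<le> pinj E X w \<and> pinj E X w \<le> z $ w"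
  proof -
    have h1: "\<forall>j\<in>S. inr E (ThS j)" using ThS by blast
    have h2: "\<forall>j\<in>S. \<forall>w. Plo w \<le> pinj E (ThS j) w"
      using S(2) pv unfolding inj_region_P_def by auto
    have h3: "\<forall>w. (\<Sum>j\<in>S. u j * pinj E (ThS j) w) \<le> z $ w"
    proof
      fix w
      have "(\<Sum>j\<in>S. u j * pinj E (ThS j) w) = (\<Sum>j\<in>S. u j * j $ w)" using pv by (intro sum.cong) auto
      then show "(\<Sum>j\<in>S. u j * pinj E (ThS j) w) \<le> z $ w" using zc[of w] by simp
    qed
    have "\<exists>X. inr E X \<and> (\<forall>w. Plo w \<le> pinj E X w \<and> pinj E X w \<le> z $ w)"
      by (rule claimE[OF _ _ S(1) S(3) S(4) h1 h2 h3]) auto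
    then show ?thesis using that by blast
  qed
  define w where "w = inj_map E (flowvec X)"
  have wP: "w \<in> inj_region_theta E Vm g b \<theta>lo \<theta>hi"
  proof -
    have "flowvec X \<in> flow_region E Vm g b \<theta>lo \<theta>hi" by (rule fr_iff[THEN iffD2]) (use X(1) in blast)
    then show ?thesis unfolding inj_region_theta_def w_def by (rule imageI)
  qed
  have wc: "w $ i = pinj E X i" for i unfolding w_def by (rule inj_flowvec)
  have zPhi: "z $ i \<le> Phi i" for i
  proof -
    have "(\<Sum>y\<in>S. u y * y $ i) \<le> (\<Sum>y\<in>S. u y * Phi i)"
      using S(2,3) unfolding inj_region_P_def by (intro sum_mono mult_left_mono) auto
    then show ?thesis using zc S(4) by (simp add: sum_distrib_right[symmetric])
  qed
  have "w \<in> inj_region_P Plo Phi" unfolding inj_region_P_def using wc X(2) zPhi by (auto intro: order_trans)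
  moreover have "\<forall>i. w $ i \<le> z $ i" using wc X(2) by simp
  ultimately show ?thesis using wP by blast
qed

end

theorem theorem1:
  fixes E :: "('v::finite \<times> 'v) set"
    and Vm :: "'v \<Rightarrow> real"
    and g b \<theta>lo \<theta>hi :: "'v \<times> 'v \<Rightarrow> real"
    and Plo Phi :: "'v \<Rightarrow> real"
  assumes tree: "tree_network E"
    and Vpos: "\<forall>i. Vm i > 0"
    and gb_nonneg: "\<forall>e\<in>E. g e \<ge> 0 \<and> b e \<ge> 0"
    and y_nonzero: "\<forall>e\<in>E. g e \<noteq> 0 \<or> b e \<noteq> 0"
    and lo_range: "\<forall>e\<in>E. - pi \<le> \<theta>lo e \<and> \<theta>lo e \<le> 0"
    and hi_range: "\<forall>e\<in>E. 0 \<le> \<theta>hi e \<and> \<theta>hi e \<le> pi"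
    and nonempty: "inj_region_theta E Vm g b \<theta>lo \<theta>hi \<inter> inj_region_P Plo Phi \<noteq> {}"
    and angle_cond: "\<forall>e\<in>E. - atan_ratio (b e) (g e) < \<theta>lo e \<and> \<theta>lo e \<le> \<theta>hi e
                          \<and> \<theta>hi e < atan_ratio (b e) (g e)"
  shows "(\<forall>p \<in> inj_region_theta E Vm g b \<theta>lo \<theta>hi \<inter> inj_region_P Plo Phi.
            \<exists>!f. f \<in> flow_region E Vm g b \<theta>lo \<theta>hi \<and> inj_map E f = p)
       \<and> inj_region_theta E Vm g b \<theta>lo \<theta>hi \<inter> inj_region_P Plo Phi
           = pareto (inj_region_theta E Vm g b \<theta>lo \<theta>hi \<inter> inj_region_P Plo Phi)
       \<and> pareto (inj_region_theta E Vm g b \<theta>lo \<theta>hi \<inter> inj_region_P Plo Phi)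
           = pareto (convex hull (inj_region_theta E Vm g b \<theta>lo \<theta>hi \<inter> inj_region_P Plo Phi))"
proof -
  interpret net E Vm g b \<theta>lo \<theta>hi
    using tree Vpos gb_nonneg y_nonzero angle_cond by unfold_locales
  let ?T = "inj_region_theta E Vm g b \<theta>lo \<theta>hi"
  let ?P = "?T \<inter> inj_region_P Plo Phi"
  have domT: "y = x" if xy: "x \<in> ?T" "y \<in> ?T" "\<forall>i. y $ i \<le> x $ i" for x y
  proof -
    obtain f where f: "f \<in> flow_region E Vm g b \<theta>lo \<theta>hi" "x = inj_map E f"
      using xy(1) unfolding inj_region_theta_def by auto
    obtain f' where f': "f' \<in> flow_region E Vm g b \<theta>lo \<theta>hi" "y = inj_map E f'"
      using xy(2) unfolding inj_region_theta_def by auto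
    have "f' = f" using dom[OF f(1) f'(1)] xy(3) f(2) f'(2) by simp
    then show ?thesis using f f' by simp
  qed
  have part1: "\<forall>p \<in> ?P. \<exists>!f. f \<in> flow_region E Vm g b \<theta>lo \<theta>hi \<and> inj_map E f = p"
  proof
    fix p assume "p \<in> ?P"
    then obtain f where f: "f \<in> flow_region E Vm g b \<theta>lo \<theta>hi" "inj_map E f = p"
      unfolding inj_region_theta_def by auto
    show "\<exists>!f. f \<in> flow_region E Vm g b \<theta>lo \<theta>hi \<and> inj_map E f = p"
    proof (rule ex1I[of _ f])
      show "f \<in> flow_region E Vm g b \<theta>lo \<theta>hi \<and> inj_map E f = p" using f by simp
    next
      fix f' assume "f' \<in> flow_region E Vm g b \<theta>lo \<theta>hi \<and> inj_map E f' = p"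
      then show "f' = f" using dom[OF f(1)] f(2) by auto
    qed
  qed
  have part2: "?P = pareto ?P"
  proof
    show "pareto ?P \<subseteq> ?P" unfolding pareto_def by auto
    show "?P \<subseteq> pareto ?P"
    proof
      fix x assume x: "x \<in> ?P"
      have "\<not> (\<exists>y\<in>?P. (\<forall>i. y $ i \<le> x $ i) \<and> (\<exists>i. y $ i < x $ i))"
        using domT x by blast
      then show "x \<in> pareto ?P" using x unfolding pareto_def by blast
    qed
  qed
  have part3: "?P = pareto (convex hull ?P)"
  proof
    show "?P \<subseteq> pareto (convex hull ?P)"
    proof
      fix x assume x: "x \<in> ?P"
      have "\<not> (\<exists>z\<in>convex hull ?P. (\<forall>i. z $ i \<le> x $ i) \<and> (\<exists>i. z $ i < x $ i))"
      proof
        assume "\<exists>z\<in>convex hull ?P. (\<forall>i. z $ i \<le> x $ i) \<and> (\<exists>i. z $ i < x $ i)"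
        then obtain z i where z: "z \<in> convex hull ?P" "\<forall>i. z $ i \<le> x $ i" "z $ i < x $ i" by blast
        obtain w where w: "w \<in> ?P" "\<forall>i. w $ i \<le> z $ i" using below[OF z(1)] by blast
        have "\<forall>i. w $ i \<le> x $ i" using w(2) z(2) order_trans by blast
        then have "w = x" using domT x w(1) by blast
        then show False using w(2) z(3) by (metis not_le)
      qed
      then show "x \<in> pareto (convex hull ?P)" using x hull_inc[of x ?P] unfolding pareto_def by blast
    qed
    show "pareto (convex hull ?P) \<subseteq> ?P"
    proof
      fix z assume z: "z \<in> pareto (convex hull ?P)"
      then have zc: "z \<in> convex hull ?P" unfolding pareto_def by blast
      obtain w where w: "w \<in> ?P" "\<forall>i. w $ i \<le> z $ i" using below[OF zc] by blast
      have "w \<in> convex hull ?P" using w(1) hull_inc by metis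
      then have "\<not> (\<exists>i. w $ i < z $ i)" using z w(2) unfolding pareto_def by blast
      then have "w = z" using w(2) by (simp add: vec_eq_iff order.order_iff_strict)
      then show "z \<in> ?P" using w(1) by simp
    qed
  qed
  show ?thesis using part1 part2 part3 by simp
qed

end
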